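(* Let $\mathcal{L}$ be an intuitionistic abstract logic. Then $(Expr_{\mathcal{L}},\le)$, with meet $\wedge$, join $\vee$, implication $\to$, least element $\bot$ and greatest element $\top$, is a Heyting algebra.
   Context: An abstract logic is a triple $\mathcal{L}=(Expr_{\mathcal{L}},Th_{\mathcal{L}},\mathcal{C}_{\mathcal{L}})$ where $Expr_{\mathcal{L}}$ is a set, $Th_{\mathcal{L}}$ a non-empty set of subsets of $Expr_{\mathcal{L}}$ (theories) closed under intersections of non-empty subfamilies, and $\mathcal{C}_{\mathcal{L}}$ a set of operations on $Expr_{\mathcal{L}}$. $\mathcal{L}$ is closed under union of chains if the union of every non-empty chain of theories is a theory. A theory $T$ is prime if $T=\bigcap\mathcal{T}$ with $\mathcal{T}\subseteq Th_{\mathcal{L}}$ non-empty finite implies $T\in\mathcal{T}$; totally prime if this holds for non-empty $\mathcal{T}$ of any size. $PTh_{\mathcal{L}}$, $TPTh_{\mathcal{L}}$ denote these sets. An intuitionistic abstract logic is one closed under union of chains with binary connectives $\vee,\wedge,\to$ and constants $\top,\bot$ such that for all $a,b$ and all $T\in TPTh_{\mathcal{L}}$: $a\vee b\in T$ iff $a\in T$ or $b\in T$; $a\wedge b\in T$ iff $a,b\in T$; $a\to b\in T$ iff for every totally prime $T'\supseteq T$, $a\in T'$ implies $b\in T'$; $\top$ lies in every theory and $\bot$ in none. The order: $a\le b$ iff $S_a\subseteq S_b$, where $S_a=\{P\in PTh_{\mathcal{L}}: a\in P\}$; the paper identifies $a,b$ when $a\le b$ and $b\le a$. *)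

theory Defs
  imports Main
begin

definition abstract_logic :: "'e set set \<Rightarrow> bool" where
  "abstract_logic Th \<longleftrightarrow> Th \<noteq> {} \<and> (\<forall>F. F \<subseteq> Th \<and> F \<noteq> {} \<longrightarrow> \<Inter>F \<in> Th)"

definition closed_union_chains :: "'e set set \<Rightarrow> bool" where
  "closed_union_chains Th \<longleftrightarrow>
     (\<forall>C. C \<subseteq> Th \<and> C \<noteq> {} \<and> (\<forall>X\<in>C. \<forall>Y\<in>C. X \<subseteq> Y \<or> Y \<subseteq> X) \<longrightarrow> \<Union>C \<in> Th)"

definition prime_theory :: "'e set set \<Rightarrow> 'e set \<Rightarrow> bool" where
  "prime_theory Th T \<longleftrightarrow> T \<in> Th \<and>
     (\<forall>F. F \<subseteq> Th \<and> F \<noteq> {} \<and> finite F \<and> T = \<Inter>F \<longrightarrow> T \<in> F)"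

definition totally_prime_theory :: "'e set set \<Rightarrow> 'e set \<Rightarrow> bool" where
  "totally_prime_theory Th T \<longleftrightarrow> T \<in> Th \<and>
     (\<forall>F. F \<subseteq> Th \<and> F \<noteq> {} \<and> T = \<Inter>F \<longrightarrow> T \<in> F)"

definition intuitionistic_abstract_logic ::
  "'e set set \<Rightarrow> ('e \<Rightarrow> 'e \<Rightarrow> 'e) \<Rightarrow> ('e \<Rightarrow> 'e \<Rightarrow> 'e) \<Rightarrow> ('e \<Rightarrow> 'e \<Rightarrow> 'e)
     \<Rightarrow> 'e \<Rightarrow> 'e \<Rightarrow> bool" where
  "intuitionistic_abstract_logic Th dsj cnj imp tp bt \<longleftrightarrow>
     abstract_logic Th \<and> closed_union_chains Th \<and>
     (\<forall>a b T. totally_prime_theory Th T \<longrightarrow>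
        (dsj a b \<in> T \<longleftrightarrow> a \<in> T \<or> b \<in> T) \<and>
        (cnj a b \<in> T \<longleftrightarrow> a \<in> T \<and> b \<in> T) \<and>
        (imp a b \<in> T \<longleftrightarrow>
           (\<forall>T'. totally_prime_theory Th T' \<and> T \<subseteq> T' \<longrightarrow> a \<in> T' \<longrightarrow> b \<in> T'))) \<and>
     (\<forall>T\<in>Th. tp \<in> T) \<and> (\<forall>T\<in>Th. bt \<notin> T)"

definition S_set :: "'e set set \<Rightarrow> 'e \<Rightarrow> 'e set set" where
  "S_set Th a = {P. prime_theory Th P \<and> a \<in> P}"

definition logic_le :: "'e set set \<Rightarrow> 'e \<Rightarrow> 'e \<Rightarrow> bool" where
  "logic_le Th a b \<longleftrightarrow> S_set Th a \<subseteq> S_set Th b"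

text \<open>Heyting algebra structure on a preorder, i.e. on its quotient by the induced
  equivalence (a \<le> b and b \<le> a): meet is a greatest lower bound, join a least
  upper bound, bt least, tp greatest, and imp is the relative pseudocomplement.\<close>
definition heyting_preorder ::
  "('e \<Rightarrow> 'e \<Rightarrow> bool) \<Rightarrow> ('e \<Rightarrow> 'e \<Rightarrow> 'e) \<Rightarrow> ('e \<Rightarrow> 'e \<Rightarrow> 'e) \<Rightarrow> ('e \<Rightarrow> 'e \<Rightarrow> 'e)
     \<Rightarrow> 'e \<Rightarrow> 'e \<Rightarrow> bool" where
  "heyting_preorder le meet join imp bt tp \<longleftrightarrow>
     (\<forall>a. le a a) \<and> (\<forall>a b c. le a b \<longrightarrow> le b c \<longrightarrow> le a c) \<and>
     (\<forall>a b. le (meet a b) a \<and> le (meet a b) b \<and> (\<forall>c. le c a \<and> le c b \<longrightarrow> le c (meet a b))) \<and>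
     (\<forall>a b. le a (join a b) \<and> le b (join a b) \<and> (\<forall>c. le a c \<and> le b c \<longrightarrow> le (join a b) c)) \<and>
     (\<forall>a. le bt a \<and> le a tp) \<and>
     (\<forall>a b c. le (meet c a) b \<longleftrightarrow> le c (imp a b))"

end

theory Submission
  imports Defs
begin

lemma tp_is_prime: "totally_prime_theory Th T \<Longrightarrow> prime_theory Th T"
  unfolding totally_prime_theory_def prime_theory_def by blast

lemma extend_tp:
  assumes cu: "closed_union_chains Th" and P: "P \<in> Th" and b: "b \<notin> P"
  shows "\<exists>T. totally_prime_theory Th T \<and> P \<subseteq> T \<and> b \<notin> T"
proof -
  let ?A = "{T \<in> Th. P \<subseteq> T \<and> b \<notin> T}"
  have "\<exists>M\<in>?A. \<forall>X\<in>?A. M \<subseteq> X \<longrightarrow> X = M"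
  proof (rule subset_Zorn_nonempty)
    show "?A \<noteq> {}" using P b by blast
  next
    fix C assume C: "C \<noteq> {}" "subset.chain ?A C"
    hence "C \<subseteq> Th" "\<forall>X\<in>C. \<forall>Y\<in>C. X \<subseteq> Y \<or> Y \<subseteq> X" "C \<subseteq> ?A"
      by (auto simp: subset_chain_def)
    hence "\<Union>C \<in> Th" using cu C(1) unfolding closed_union_chains_def by blast
    thus "\<Union>C \<in> ?A" using \<open>C \<subseteq> ?A\<close> C(1) by blast
  qed
  then obtain M where M: "M \<in> ?A" and mx: "\<forall>X\<in>?A. M \<subseteq> X \<longrightarrow> X = M" by blast
  have "totally_prime_theory Th M"
    unfolding totally_prime_theory_def
  proof (intro conjI allI impI)
    show "M \<in> Th" using M by blast
  next
    fix F assume F: "F \<subseteq> Th \<and> F \<noteq> {} \<and> M = \<Inter>F"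
    show "M \<in> F"
    proof (rule ccontr)
      assume nF: "M \<notin> F"
      have "\<forall>X\<in>F. b \<in> X"
      proof
        fix X assume X: "X \<in> F"
        have "M \<subseteq> X" using F X by blast
        moreover have "X \<noteq> M" using nF X by blast
        ultimately have "X \<notin> ?A" using mx by blast
        thus "b \<in> X" using X F M by blast
      qed
      hence "b \<in> M" using F by blast
      thus False using M by blast
    qed
  qed
  thus ?thesis using M by blast
qed

lemma le_tp:
  assumes "intuitionistic_abstract_logic Th dsj cnj imp tp bt"
  shows "logic_le Th a b \<longleftrightarrow> (\<forall>T. totally_prime_theory Th T \<longrightarrow> a \<in> T \<longrightarrow> b \<in> T)"
proof
  assume "logic_le Th a b"
  thus "\<forall>T. totally_prime_theory Th T \<longrightarrow> a \<in> T \<longrightarrow> b \<in> T"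
    unfolding logic_le_def S_set_def using tp_is_prime by blast
next
  assume H: "\<forall>T. totally_prime_theory Th T \<longrightarrow> a \<in> T \<longrightarrow> b \<in> T"
  have cu: "closed_union_chains Th" using assms unfolding intuitionistic_abstract_logic_def by (elim conjE)
  show "logic_le Th a b" unfolding logic_le_def S_set_def
  proof (safe)
    fix P assume P: "prime_theory Th P" "a \<in> P"
    show "b \<in> P"
    proof (rule ccontr)
      assume "b \<notin> P"
      then obtain T where "totally_prime_theory Th T" "P \<subseteq> T" "b \<notin> T"
        using extend_tp[OF cu, of P b] P(1) unfolding prime_theory_def by blast
      thus False using H P by blast
    qed
  qed
qed

theorem corollary4p3:
  fixes Th :: "'e set set"
    and dsj cnj imp :: "'e \<Rightarrow> 'e \<Rightarrow> 'e" and tp bt :: 'e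
  assumes "intuitionistic_abstract_logic Th dsj cnj imp tp bt"
  shows "heyting_preorder (logic_le Th) cnj dsj imp bt tp"
proof -
  note L = le_tp[OF assms]
  have X: "\<forall>a b T. totally_prime_theory Th T \<longrightarrow>
        (dsj a b \<in> T \<longleftrightarrow> a \<in> T \<or> b \<in> T) \<and>
        (cnj a b \<in> T \<longleftrightarrow> a \<in> T \<and> b \<in> T) \<and>
        (imp a b \<in> T \<longleftrightarrow>
           (\<forall>T'. totally_prime_theory Th T' \<and> T \<subseteq> T' \<longrightarrow> a \<in> T' \<longrightarrow> b \<in> T'))"
    and TB1: "\<forall>T\<in>Th. tp \<in> T" and TB2: "\<forall>T\<in>Th. bt \<notin> T"
    using assms unfolding intuitionistic_abstract_logic_def by (fact conjunct1[OF conjunct2[OF conjunct2]] conjunct1[OF conjunct2[OF conjunct2[OF conjunct2]]] conjunct2[OF conjunct2[OF conjunct2[OF conjunct2]]])+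
  have Cd: "\<And>a b T. totally_prime_theory Th T \<Longrightarrow> (dsj a b \<in> T \<longleftrightarrow> a \<in> T \<or> b \<in> T)"
    using X by (meson)
  have Cc: "\<And>a b T. totally_prime_theory Th T \<Longrightarrow> (cnj a b \<in> T \<longleftrightarrow> a \<in> T \<and> b \<in> T)"
    using X by (meson)
  have Ci: "\<And>a b T. totally_prime_theory Th T \<Longrightarrow> (imp a b \<in> T \<longleftrightarrow>
           (\<forall>T'. totally_prime_theory Th T' \<and> T \<subseteq> T' \<longrightarrow> a \<in> T' \<longrightarrow> b \<in> T'))"
    using X by (meson)
  note TB = TB1[rule_format] TB2[rule_format]
  have inTh: "\<And>T. totally_prime_theory Th T \<Longrightarrow> T \<in> Th"
    unfolding totally_prime_theory_def by blast
  have imp_part: "\<forall>a b c. logic_le Th (cnj c a) b \<longleftrightarrow> logic_le Th c (imp a b)"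
  proof (intro allI iffI)
    fix a b c assume H: "logic_le Th (cnj c a) b"
    have H': "\<And>T. totally_prime_theory Th T \<Longrightarrow> cnj c a \<in> T \<Longrightarrow> b \<in> T"
      using H unfolding L by blast
    show "logic_le Th c (imp a b)" unfolding L
    proof (intro allI impI)
      fix T assume T: "totally_prime_theory Th T" "c \<in> T"
      show "imp a b \<in> T" unfolding Ci[OF T(1)]
      proof (intro allI impI)
        fix T' assume T': "totally_prime_theory Th T' \<and> T \<subseteq> T'" "a \<in> T'"
        hence "cnj c a \<in> T'" using Cc T by blast
        thus "b \<in> T'" using H' T' by blast
      qed
    qed
  next
    fix a b c assume H: "logic_le Th c (imp a b)"
    have H': "\<And>T. totally_prime_theory Th T \<Longrightarrow> c \<in> T \<Longrightarrow> imp a b \<in> T"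
      using H unfolding L by blast
    show "logic_le Th (cnj c a) b" unfolding L
    proof (intro allI impI)
      fix T assume T: "totally_prime_theory Th T" "cnj c a \<in> T"
      hence ca: "c \<in> T" "a \<in> T" using Cc by blast+
      hence "imp a b \<in> T" using H' T by blast
      thus "b \<in> T" using Ci[OF T(1)] T(1) ca(2) by blast
    qed
  qed
  show ?thesis unfolding heyting_preorder_def
  proof (intro conjI)
    show "\<forall>a. logic_le Th a a" unfolding L by blast
    show "\<forall>a b c. logic_le Th a b \<longrightarrow> logic_le Th b c \<longrightarrow> logic_le Th a c"
      unfolding L by blast
    show "\<forall>a b. logic_le Th (cnj a b) a \<and> logic_le Th (cnj a b) b \<and>
      (\<forall>c. logic_le Th c a \<and> logic_le Th c b \<longrightarrow> logic_le Th c (cnj a b))"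
      unfolding L using Cc Cd by blast
    show "\<forall>a b. logic_le Th a (dsj a b) \<and> logic_le Th b (dsj a b) \<and>
      (\<forall>c. logic_le Th a c \<and> logic_le Th b c \<longrightarrow> logic_le Th (dsj a b) c)"
      unfolding L using Cc Cd by blast
    show "\<forall>a. logic_le Th bt a \<and> logic_le Th a tp"
      unfolding L using TB inTh by blast
    show "\<forall>a b c. logic_le Th (cnj c a) b \<longleftrightarrow> logic_le Th c (imp a b)"
      by (rule imp_part)
  qed
qed

end
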